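(* Let $m,n$ be positive integers and $j$ a non-negative integer such that $m\leq n$ and $j<n$. Then $$|\mathrm{Hom}^{j}(P_m,P_n)| = \sum_{t=\max\left\{0,\left\lceil\frac{j-(n-m)}{2}\right\rceil\right\}}^{\left\lceil\frac{m+j}{2}\right\rceil-1}\binom{m-1}{t} - \sum_{t=0}^{\left\lfloor\frac{j-(n-m)}{2}\right\rfloor-1}\binom{m-1}{t} -\sum_{t=0}^{\left\lfloor\frac{m-j-1}{2}\right\rfloor-1}\binom{m-1}{t}.$$
   Context: For a positive integer $n$, $P_n$ denotes the path with vertex set $\{0,1,\dots,n-1\}$ and edge set $\{\{i,i+1\} : i=0,\dots,n-2\}$. A homomorphism from a graph $G$ to a graph $H$ is a map $f:V(G)\to V(H)$ with $\{f(x),f(y)\}\in E(H)$ for every edge $\{x,y\}\in E(G)$. $\mathrm{Hom}^{j}(P_m,P_n)$ denotes the set of homomorphisms $f:P_m\to P_n$ with $f(0)=j$. A sum whose upper limit is smaller than its lower limit is zero, and $\binom{a}{b}=0$ if $b<0$ or $b>a$. *)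

theory Defs
  imports Complex_Main "HOL-Library.FuncSet"
begin

definition path_verts :: "nat \<Rightarrow> nat set" where
  "path_verts n = {0..<n}"

definition path_edges :: "nat \<Rightarrow> nat set set" where
  "path_edges n = {{i, i + 1} | i. i + 1 < n}"

definition path_hom :: "nat \<Rightarrow> nat \<Rightarrow> (nat \<Rightarrow> nat) set" where
  "path_hom m n = {f \<in> path_verts m \<rightarrow>\<^sub>E path_verts n.
      \<forall>x y. {x, y} \<in> path_edges m \<longrightarrow> {f x, f y} \<in> path_edges n}"

definition path_hom_at :: "nat \<Rightarrow> nat \<Rightarrow> nat \<Rightarrow> (nat \<Rightarrow> nat) set" where
  "path_hom_at j m n = {f \<in> path_hom m n. f 0 = j}"

end

theory Submission imports Defs begin

definition Lsum :: "nat \<Rightarrow> int \<Rightarrow> int" where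
  "Lsum k c = (\<Sum>t\<in>{0..c-1}. int (k choose nat t))"

lemma Lsum_nonpos: "c \<le> 0 \<Longrightarrow> Lsum k c = 0"
  by (simp add: Lsum_def)

lemma Lsum_Suc: "c \<ge> 0 \<Longrightarrow> Lsum k (c+1) = Lsum k c + int (k choose nat c)"
proof -
  assume c: "c \<ge> 0"
  have "{0..c} = insert c {0..c-1}" using c by auto
  then show ?thesis by (simp add: Lsum_def add.commute)
qed

lemma Lsum_rec_nat: "Lsum (Suc k) (int N) = Lsum k (int N) + Lsum k (int N - 1)"
proof (induction N)
  case 0
  then show ?case by (simp add: Lsum_nonpos)
next
  case (Suc N)
  show ?case
  proof (cases N)
    case 0
    then show ?thesis by (simp add: Lsum_def)
  next
    case (Suc N')
    have e1: "int (Suc N) = int N + 1" by simp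
    have e2: "int N = (int N - 1) + 1" by simp
    have f1: "Lsum k (int N) = Lsum k (int N') + int (k choose N')"
      using Lsum_Suc[of "int N'" k] Suc by (metis add.commute of_nat_0_le_iff of_nat_Suc nat_int)
    have f2: "Lsum k (int (Suc N)) = Lsum k (int N) + int (k choose N)"
      using Lsum_Suc[of "int N" k] e1 by (metis of_nat_0_le_iff nat_int)
    have f3: "Lsum (Suc k) (int (Suc N)) = Lsum (Suc k) (int N) + int (Suc k choose N)"
      using Lsum_Suc[of "int N" "Suc k"] e1 by (metis of_nat_0_le_iff nat_int)
    have f4: "int N - 1 = int N'" using Suc by simp
    show ?thesis using f1 f2 f3 f4 Suc.IH Suc by simp
  qed
qed

lemma Lsum_rec: "Lsum (Suc k) c = Lsum k c + Lsum k (c - 1)"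
proof (cases "c \<ge> 0")
  case True
  then obtain N where "c = int N" by (metis nonneg_eq_int)
  then show ?thesis using Lsum_rec_nat by simp
next
  case False
  then show ?thesis by (simp add: Lsum_nonpos)
qed

lemma Lsum_zero: "Lsum 0 c = (if c \<ge> 1 then 1 else 0)"
proof (cases "c \<ge> 1")
  case True
  have "Lsum 0 c = (\<Sum>t\<in>{0..c-1}. if t = 0 then 1 else 0)"
    unfolding Lsum_def by (intro sum.cong) (auto simp: nat_eq_iff)
  also have "\<dots> = 1" using True by simp
  finally show ?thesis using True by simp
next
  case False
  then show ?thesis by (simp add: Lsum_nonpos)
qed

lemma Lsum_compl: "Lsum k c + Lsum k (int k + 1 - c) = 2 ^ k"
proof (induction k arbitrary: c)
  case 0
  then show ?case by (simp add: Lsum_zero)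
next
  case (Suc k)
  have "Lsum (Suc k) c + Lsum (Suc k) (int (Suc k) + 1 - c)
     = (Lsum k c + Lsum k (int k + 1 - c)) + (Lsum k (c - 1) + Lsum k (int k + 1 - (c - 1)))"
    by (simp add: Lsum_rec algebra_simps)
  also have "\<dots> = 2 ^ Suc k" using Suc.IH[of c] Suc.IH[of "c - 1"] by simp
  finally show ?case .
qed

definition Hf :: "nat \<Rightarrow> int \<Rightarrow> int" where
  "Hf k a = Lsum k ((int k - a + 1) div 2) + Lsum k ((int k - a) div 2)"

lemma Hf_rec: "Hf (Suc k) a = Hf k (a - 1) + Hf k (a + 1)"
proof -
  have 1: "Hf (Suc k) a = Lsum (Suc k) ((int k - a + 2) div 2) + Lsum (Suc k) ((int k - a + 1) div 2)"
    unfolding Hf_def by (simp add: algebra_simps)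
  have 2: "Hf k (a - 1) = Lsum k ((int k - a + 2) div 2) + Lsum k ((int k - a + 1) div 2)"
    unfolding Hf_def by (simp add: algebra_simps)
  have 3: "Hf k (a + 1) = Lsum k ((int k - a) div 2) + Lsum k ((int k - a - 1) div 2)"
    unfolding Hf_def by (simp add: algebra_simps)
  have a: "(int k - a + 2) div 2 - 1 = (int k - a) div 2"
    by presburger
  have b: "(int k - a + 1) div 2 - 1 = (int k - a - 1) div 2"
    by presburger
  show ?thesis unfolding 1 2 3 Lsum_rec[of k] a b by simp
qed

lemma Hf_m1: "Hf k (-1) = 2 ^ k"
proof -
  have e: "(int k + 1) div 2 = int k + 1 - (int k + 2) div 2" by presburger
  have e1: "int k - -1 + 1 = int k + 2" and e2: "int k - -1 = int k + 1" by simp_all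
  have e3: "int k + 1 + 1 = int k + 2" by simp
  show ?thesis unfolding Hf_def e1 e2 e e3 by (rule Lsum_compl)
qed

lemma Hf_big: "a \<ge> int k \<Longrightarrow> Hf k a = 0"
  unfolding Hf_def by (simp add: Lsum_nonpos)

definition Ff :: "nat \<Rightarrow> int \<Rightarrow> int \<Rightarrow> int" where
  "Ff k j r = 2 ^ k - Hf k j - Hf k r"

lemma Ff_rec: "Ff (Suc k) j r = Ff k (j - 1) (r + 1) + Ff k (j + 1) (r - 1)"
  unfolding Ff_def by (simp add: Hf_rec algebra_simps)


lemma edges_iff: "{x, y} \<in> path_edges n \<longleftrightarrow> (y = x + 1 \<and> x + 1 < n) \<or> (x = y + 1 \<and> y + 1 < n)"
  unfolding path_edges_def by (auto simp: doubleton_eq_iff)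

definition adj :: "nat \<Rightarrow> nat \<Rightarrow> bool" where
  "adj a b \<longleftrightarrow> b = a + 1 \<or> a = b + 1"

lemma hom_iff: "f \<in> path_hom m n \<longleftrightarrow>
   f \<in> {0..<m} \<rightarrow>\<^sub>E {0..<n} \<and> (\<forall>i. i + 1 < m \<longrightarrow> adj (f i) (f (i + 1)))"
proof
  assume f: "f \<in> path_hom m n"
  then have pi: "f \<in> {0..<m} \<rightarrow>\<^sub>E {0..<n}" by (simp add: path_hom_def path_verts_def)
  moreover have "adj (f i) (f (i + 1))" if "i + 1 < m" for i
  proof -
    have "{i, i+1} \<in> path_edges m" using that by (simp add: edges_iff)
    then have "{f i, f (i+1)} \<in> path_edges n" using f by (simp add: path_hom_def)
    then show ?thesis by (auto simp: edges_iff adj_def)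
  qed
  ultimately show "f \<in> {0..<m} \<rightarrow>\<^sub>E {0..<n} \<and> (\<forall>i. i + 1 < m \<longrightarrow> adj (f i) (f (i + 1)))" by blast
next
  assume h: "f \<in> {0..<m} \<rightarrow>\<^sub>E {0..<n} \<and> (\<forall>i. i + 1 < m \<longrightarrow> adj (f i) (f (i + 1)))"
  have "{f x, f y} \<in> path_edges n" if "{x, y} \<in> path_edges m" for x y
  proof -
    from that have "(y = x + 1 \<and> x + 1 < m) \<or> (x = y + 1 \<and> y + 1 < m)" by (simp add: edges_iff)
    then show ?thesis
    proof
      assume a: "y = x + 1 \<and> x + 1 < m"
      then have "f x < n" "f y < n" using h by (auto simp: PiE_iff)
      moreover have "adj (f x) (f y)" using h a by auto
      ultimately show ?thesis by (auto simp: edges_iff adj_def)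
    next
      assume a: "x = y + 1 \<and> y + 1 < m"
      then have "f x < n" "f y < n" using h by (auto simp: PiE_iff)
      moreover have "adj (f y) (f x)" using h a by auto
      ultimately show ?thesis by (auto simp: edges_iff adj_def)
    qed
  qed
  then show "f \<in> path_hom m n" using h by (simp add: path_hom_def path_verts_def)
qed

lemma finite_hom_at: "finite (path_hom_at j m n)"
proof -
  have "path_hom_at j m n \<subseteq> {0..<m} \<rightarrow>\<^sub>E {0..<n}"
    by (auto simp: path_hom_at_def hom_iff)
  then show ?thesis by (rule finite_subset) (simp add: finite_PiE)
qed

lemma base_card: assumes "j < n" shows "card (path_hom_at j 1 n) = 1"
proof -
  have "path_hom_at j 1 n = {(\<lambda>x. if x = 0 then j else undefined)}"
  proof (intro equalityI subsetI)
    fix f assume "f \<in> path_hom_at j 1 n"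
    then have "f \<in> {0..<1} \<rightarrow>\<^sub>E {0..<n}" "f 0 = j" by (auto simp: path_hom_at_def hom_iff)
    then have "f = (\<lambda>x. if x = 0 then j else undefined)"
      by (auto simp: fun_eq_iff PiE_iff extensional_def)
    then show "f \<in> {(\<lambda>x. if x = 0 then j else undefined)}" by simp
  next
    fix f :: "nat \<Rightarrow> nat" assume "f \<in> {(\<lambda>x. if x = 0 then j else undefined)}"
    then show "f \<in> path_hom_at j 1 n" using assms
      by (auto simp: path_hom_at_def hom_iff PiE_iff extensional_def)
  qed
  then show ?thesis by simp
qed

lemma shift_card:
  assumes "j < n" "adj j j'"
  shows "card {f \<in> path_hom_at j (Suc (Suc k)) n. f 1 = j'} = card (path_hom_at j' (Suc k) n)"
proof (rule bij_betw_same_card)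
  let ?sh = "\<lambda>f. (\<lambda>x. if x < Suc k then f (Suc x) else undefined)"
  let ?ex = "\<lambda>g. (\<lambda>x. if x = 0 then j else if x < Suc (Suc k) then g (x - 1) else undefined)"
  show "bij_betw ?sh {f \<in> path_hom_at j (Suc (Suc k)) n. f 1 = j'} (path_hom_at j' (Suc k) n)"
  proof (rule bij_betw_byWitness[where f' = ?ex])
    show "\<forall>a\<in>{f \<in> path_hom_at j (Suc (Suc k)) n. f 1 = j'}. ?ex (?sh a) = a"
    proof
      fix f assume "f \<in> {f \<in> path_hom_at j (Suc (Suc k)) n. f 1 = j'}"
      then have "f \<in> {0..<Suc (Suc k)} \<rightarrow>\<^sub>E {0..<n}" "f 0 = j" by (auto simp: path_hom_at_def hom_iff)
      then show "?ex (?sh f) = f"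
        by (auto simp: fun_eq_iff PiE_iff extensional_def)
    qed
    show "\<forall>a\<in>path_hom_at j' (Suc k) n. ?sh (?ex a) = a"
    proof
      fix g assume "g \<in> path_hom_at j' (Suc k) n"
      then have "g \<in> {0..<Suc k} \<rightarrow>\<^sub>E {0..<n}" by (auto simp: path_hom_at_def hom_iff)
      then show "?sh (?ex g) = g"
        by (auto simp: fun_eq_iff PiE_iff extensional_def)
    qed
    show "?sh ` {f \<in> path_hom_at j (Suc (Suc k)) n. f 1 = j'} \<subseteq> path_hom_at j' (Suc k) n"
    proof
      fix g assume "g \<in> ?sh ` {f \<in> path_hom_at j (Suc (Suc k)) n. f 1 = j'}"
      then obtain f where f: "f \<in> path_hom_at j (Suc (Suc k)) n" "f 1 = j'" and g: "g = ?sh f" by blast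
      then have pi: "f \<in> {0..<Suc (Suc k)} \<rightarrow>\<^sub>E {0..<n}"
        and ad: "\<forall>i. i + 1 < Suc (Suc k) \<longrightarrow> adj (f i) (f (i + 1))"
        by (auto simp: path_hom_at_def hom_iff)
      have "g \<in> {0..<Suc k} \<rightarrow>\<^sub>E {0..<n}" using pi g by (auto simp: PiE_iff extensional_def)
      moreover have "\<forall>i. i + 1 < Suc k \<longrightarrow> adj (g i) (g (i + 1))"
      proof (intro allI impI)
        fix i assume "i + 1 < Suc k"
        then show "adj (g i) (g (i + 1))" using ad[rule_format, of "Suc i"] g by simp
      qed
      moreover have "g 0 = j'" using g f by simp
      ultimately show "g \<in> path_hom_at j' (Suc k) n" by (simp add: path_hom_at_def hom_iff)
    qed
    show "?ex ` path_hom_at j' (Suc k) n \<subseteq> {f \<in> path_hom_at j (Suc (Suc k)) n. f 1 = j'}"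
    proof
      fix f assume "f \<in> ?ex ` path_hom_at j' (Suc k) n"
      then obtain g where g: "g \<in> path_hom_at j' (Suc k) n" and f: "f = ?ex g" by blast
      then have pi: "g \<in> {0..<Suc k} \<rightarrow>\<^sub>E {0..<n}"
        and ad: "\<forall>i. i + 1 < Suc k \<longrightarrow> adj (g i) (g (i + 1))" and g0: "g 0 = j'"
        by (auto simp: path_hom_at_def hom_iff)
      have "f \<in> {0..<Suc (Suc k)} \<rightarrow>\<^sub>E {0..<n}" using pi f assms(1)
        by (auto simp: PiE_iff extensional_def)
      moreover have "\<forall>i. i + 1 < Suc (Suc k) \<longrightarrow> adj (f i) (f (i + 1))"
      proof (intro allI impI)
        fix i assume i: "i + 1 < Suc (Suc k)"
        show "adj (f i) (f (i + 1))"
        proof (cases i)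
          case 0
          then show ?thesis using f g0 assms(2) by simp
        next
          case (Suc i')
          then show ?thesis using f ad[rule_format, of i'] i by simp
        qed
      qed
      moreover have "f 0 = j" "f 1 = j'" using f g0 by simp_all
      ultimately show "f \<in> {f \<in> path_hom_at j (Suc (Suc k)) n. f 1 = j'}"
        by (simp add: path_hom_at_def hom_iff)
    qed
  qed
qed

lemma step_card:
  assumes "j < n"
  shows "card (path_hom_at j (Suc (Suc k)) n) =
     (if 0 < j then card (path_hom_at (j - 1) (Suc k) n) else 0)
     + (if j + 1 < n then card (path_hom_at (j + 1) (Suc k) n) else 0)"
proof -
  let ?P = "path_hom_at j (Suc (Suc k)) n"
  let ?A = "{f \<in> ?P. f 1 = j - 1 \<and> 0 < j}"
  let ?B = "{f \<in> ?P. f 1 = j + 1}"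
  have split: "?P = ?A \<union> ?B"
  proof (intro equalityI subsetI)
    fix f assume f: "f \<in> ?P"
    then have "adj (f 0) (f 1)" "f 0 = j" by (auto simp: path_hom_at_def hom_iff)
    then show "f \<in> ?A \<union> ?B" using f by (auto simp: adj_def)
  qed auto
  have disj: "?A \<inter> ?B = {}" by auto
  have fin: "finite ?A" "finite ?B" using finite_hom_at[of j "Suc (Suc k)" n] by auto
  have cA: "card ?A = (if 0 < j then card (path_hom_at (j - 1) (Suc k) n) else 0)"
  proof (cases "0 < j")
    case True
    then have "?A = {f \<in> ?P. f 1 = j - 1}" by auto
    then show ?thesis using True shift_card[of j n "j - 1" k] assms by (simp add: adj_def)
  qed simp
  have cB: "card ?B = (if j + 1 < n then card (path_hom_at (j + 1) (Suc k) n) else 0)"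
  proof (cases "j + 1 < n")
    case True
    then show ?thesis using shift_card[of j n "j + 1" k] assms by (simp add: adj_def)
  next
    case False
    have "?B = {}"
    proof (intro equalityI subsetI)
      fix f assume "f \<in> ?B"
      then have "f \<in> {0..<Suc (Suc k)} \<rightarrow>\<^sub>E {0..<n}" "f 1 = j + 1" by (auto simp: path_hom_at_def hom_iff)
      then have "f 1 \<in> {0..<n}" by (intro PiE_mem[of f]) auto
      then have "j + 1 < n" using \<open>f 1 = j + 1\<close> by simp
      then show "f \<in> {}" using False by simp
    qed simp
    then show ?thesis using False by (simp only: card.empty) simp
  qed
  show ?thesis using split disj fin cA cB card_Un_disjoint[of ?A ?B] by simp
qed

lemma walk_formula:
  assumes "j < n" "k < n"
  shows "int (card (path_hom_at j (Suc k) n)) = Ff k (int j) (int n - 1 - int j)"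
  using assms
proof (induction k arbitrary: j)
  case 0
  then show ?case using base_card[of j n] by (simp add: Ff_def Hf_def Lsum_def)
next
  case (Suc k)
  have IH1: "0 < j \<Longrightarrow> int (card (path_hom_at (j - 1) (Suc k) n)) = Ff k (int j - 1) (int n - 1 - int j + 1)"
    using Suc.IH[of "j - 1"] Suc.prems by (simp add: of_nat_diff algebra_simps)
  have IH2: "j + 1 < n \<Longrightarrow> int (card (path_hom_at (j + 1) (Suc k) n)) = Ff k (int j + 1) (int n - 1 - int j - 1)"
    using Suc.IH[of "j + 1"] Suc.prems by (simp add: algebra_simps)
  have z1: "j = 0 \<Longrightarrow> Ff k (int j - 1) (int n - 1 - int j + 1) = 0"
    using Suc.prems by (simp add: Ff_def Hf_m1 Hf_big)
  have z2: "\<not> j + 1 < n \<Longrightarrow> Ff k (int j + 1) (int n - 1 - int j - 1) = 0"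
  proof -
    assume "\<not> j + 1 < n"
    then have "int n - 1 - int j - 1 = -1" "int j + 1 \<ge> int k" using Suc.prems by auto
    then show ?thesis by (simp add: Ff_def Hf_m1 Hf_big)
  qed
  have "int (card (path_hom_at j (Suc (Suc k)) n)) =
     Ff k (int j - 1) (int n - 1 - int j + 1) + Ff k (int j + 1) (int n - 1 - int j - 1)"
    using step_card[of j n k] Suc.prems IH1 IH2 z1 z2 by auto
  also have "\<dots> = Ff (Suc k) (int j) (int n - 1 - int j)" by (simp add: Ff_rec)
  finally show ?case .
qed


lemma ceil_half: "\<lceil>real_of_int x / 2\<rceil> = (x + 1) div 2"
proof -
  have "\<lceil>real_of_int x / 2\<rceil> = \<lceil>real_of_int x / real_of_int 2\<rceil>" by simp
  also have "\<dots> = - (- x div 2)" by (rule ceiling_divide_eq_div)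
  also have "\<dots> = (x + 1) div 2" by presburger
  finally show ?thesis .
qed

lemma floor_half: "\<lfloor>real_of_int x / 2\<rfloor> = x div 2"
proof -
  have "\<lfloor>real_of_int x / 2\<rfloor> = \<lfloor>real_of_int x / real_of_int 2\<rfloor>" by simp
  also have "\<dots> = x div 2" by (rule floor_divide_of_int_eq)
  finally show ?thesis .
qed

lemma sum_ivl: assumes "0 \<le> a" "a \<le> b + 1"
  shows "(\<Sum>t\<in>{a..b}. int (k choose nat t)) = Lsum k (b + 1) - Lsum k a"
proof -
  have "{0..b} = {0..a-1} \<union> {a..b}" using assms by auto
  moreover have "{0..a-1} \<inter> {a..b} = {}" by auto
  ultimately have "Lsum k (b + 1) = Lsum k a + (\<Sum>t\<in>{a..b}. int (k choose nat t))"
    unfolding Lsum_def by (simp add: sum.union_disjoint)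
  then show ?thesis by simp
qed

theorem corollary1:
  fixes m n j :: nat
  assumes "0 < m" and "0 < n" and "m \<le> n" and "j < n"
  shows "int (card (path_hom_at j m n)) =
      (\<Sum>t \<in> {max 0 \<lceil>(real j - (real n - real m)) / 2\<rceil> .. \<lceil>(real m + real j) / 2\<rceil> - 1}.
          int ((m - 1) choose nat t))
    - (\<Sum>t \<in> {0 .. \<lfloor>(real j - (real n - real m)) / 2\<rfloor> - 1}. int ((m - 1) choose nat t))
    - (\<Sum>t \<in> {0 .. \<lfloor>(real m - real j - 1) / 2\<rfloor> - 1}. int ((m - 1) choose nat t))"
proof -
  define k where "k = m - 1"
  have mk: "m = Suc k" using assms(1) by (simp add: k_def)
  define C1 where "C1 = (int j - int n + int m + 1) div 2"
  define F1 where "F1 = (int j - int n + int m) div 2"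
  define C2 where "C2 = (int m + int j + 1) div 2"
  define F3 where "F3 = (int m - int j - 1) div 2"
  have r1: "\<lceil>(real j - (real n - real m)) / 2\<rceil> = C1"
    using ceil_half[of "int j - int n + int m"] by (simp add: C1_def algebra_simps)
  have r2: "\<lceil>(real m + real j) / 2\<rceil> = C2"
    using ceil_half[of "int m + int j"] by (simp add: C2_def algebra_simps)
  have r3: "\<lfloor>(real j - (real n - real m)) / 2\<rfloor> = F1"
    using floor_half[of "int j - int n + int m"] by (simp add: F1_def algebra_simps)
  have r4: "\<lfloor>(real m - real j - 1) / 2\<rfloor> = F3"
    using floor_half[of "int m - int j - 1"] by (simp add: F3_def algebra_simps)
  have s1: "(\<Sum>t \<in> {max 0 C1 .. C2 - 1}. int (k choose nat t)) = Lsum k C2 - Lsum k C1"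
  proof -
    have "max 0 C1 \<le> C2 - 1 + 1" unfolding C1_def C2_def using assms by simp
    then have "(\<Sum>t \<in> {max 0 C1 .. C2 - 1}. int (k choose nat t)) = Lsum k C2 - Lsum k (max 0 C1)"
      using sum_ivl[of "max 0 C1" "C2 - 1" k] by simp
    moreover have "Lsum k (max 0 C1) = Lsum k C1"
      by (cases "C1 \<le> 0") (auto simp: Lsum_nonpos max_def)
    ultimately show ?thesis by simp
  qed
  have s2: "(\<Sum>t \<in> {0 .. F1 - 1}. int (k choose nat t)) = Lsum k F1" by (simp add: Lsum_def)
  have s3: "(\<Sum>t \<in> {0 .. F3 - 1}. int (k choose nat t)) = Lsum k F3" by (simp add: Lsum_def)
  have c2: "Lsum k C2 = 2 ^ k - Lsum k ((int k - int j + 1) div 2)"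
  proof -
    have "int k + 1 - C2 = (int k - int j + 1) div 2" unfolding C2_def mk by presburger
    then show ?thesis using Lsum_compl[of k C2] by simp
  qed
  have h1: "Hf k (int j) = Lsum k ((int k - int j + 1) div 2) + Lsum k F3"
  proof -
    have e: "int m - int j - 1 = int k - int j" using mk by simp
    show ?thesis unfolding Hf_def F3_def e by simp
  qed
  have h2: "Hf k (int n - 1 - int j) = Lsum k C1 + Lsum k F1"
  proof -
    have e1: "int j - int n + int m = int k - (int n - 1 - int j)" using mk by simp
    have e2: "int j - int n + int m + 1 = int k - (int n - 1 - int j) + 1" using mk by simp
    show ?thesis unfolding Hf_def C1_def F1_def e1 e2 by (rule refl)
  qed
  have main: "int (card (path_hom_at j m n)) = Ff k (int j) (int n - 1 - int j)"
    using walk_formula[of j n k] assms mk by simp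
  show ?thesis
    unfolding r1 r2 r3 r4 k_def[symmetric] s1 s2 s3 main Ff_def h1 h2 c2
    by simp
qed

end
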